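(* Let $k\geq 0$ and let $i,j\geq k+2$ be integers. Then $R_k^{\mathcal{CO}}(i,j)\geq (i-1)+R_k^{\mathcal{CO}}(i,j-k-1)$, where $\mathcal{CO}$ is the class of cographs.
   Context: All graphs are finite and simple. For a graph $G$ and a nonnegative integer $k$, a $k$-sparse $j$-set is a set of $j$ vertices of $G$ inducing a subgraph of maximum degree at most $k$; a $k$-dense $i$-set is a set of $i$ vertices of $G$ that is $k$-sparse in the complement of $G$. For a graph class $\mathcal{G}$, $R_k^{\mathcal{G}}(i,j)$ is the smallest natural number $n$ such that every graph on $n$ vertices in $\mathcal{G}$ has either a $k$-dense $i$-set or a $k$-sparse $j$-set (in particular every set of at most $k+1$ vertices is both $k$-sparse and $k$-dense). A cograph is a graph containing no induced path on four vertices. *)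

theory Defs
  imports Main
begin

text \<open>A finite simple graph with vertex set V (a finite set of naturals; every
finite graph is isomorphic to such a graph) and symmetric irreflexive edge
relation E whose edges lie inside V.\<close>
definition simple_graph :: "nat set \<Rightarrow> (nat \<Rightarrow> nat \<Rightarrow> bool) \<Rightarrow> bool" where
  "simple_graph V E \<longleftrightarrow> finite V \<and> (\<forall>u v. E u v \<longrightarrow> E v u)
     \<and> (\<forall>u. \<not> E u u) \<and> (\<forall>u v. E u v \<longrightarrow> u \<in> V \<and> v \<in> V)"

definition k_sparse :: "(nat \<Rightarrow> nat \<Rightarrow> bool) \<Rightarrow> nat \<Rightarrow> nat set \<Rightarrow> bool" where
  "k_sparse E k S \<longleftrightarrow> (\<forall>u\<in>S. card {v\<in>S. E u v} \<le> k)"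

definition compl_edges :: "(nat \<Rightarrow> nat \<Rightarrow> bool) \<Rightarrow> nat \<Rightarrow> nat \<Rightarrow> bool" where
  "compl_edges E u v \<longleftrightarrow> u \<noteq> v \<and> \<not> E u v"

definition k_dense :: "(nat \<Rightarrow> nat \<Rightarrow> bool) \<Rightarrow> nat \<Rightarrow> nat set \<Rightarrow> bool" where
  "k_dense E k S \<longleftrightarrow> k_sparse (compl_edges E) k S"

definition cograph :: "nat set \<Rightarrow> (nat \<Rightarrow> nat \<Rightarrow> bool) \<Rightarrow> bool" where
  "cograph V E \<longleftrightarrow> simple_graph V E \<and>
     \<not> (\<exists>a\<in>V. \<exists>b\<in>V. \<exists>c\<in>V. \<exists>d\<in>V. E a b \<and> E b c \<and> E c d \<and>
          \<not> E a c \<and> \<not> E b d \<and> \<not> E a d \<and> a \<noteq> d)"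

definition has_dense_or_sparse :: "nat set \<Rightarrow> (nat \<Rightarrow> nat \<Rightarrow> bool) \<Rightarrow> nat \<Rightarrow> nat \<Rightarrow> nat \<Rightarrow> bool" where
  "has_dense_or_sparse V E k i j \<longleftrightarrow>
     (\<exists>S\<subseteq>V. card S = i \<and> k_dense E k S) \<or> (\<exists>S\<subseteq>V. card S = j \<and> k_sparse E k S)"

definition R_cograph :: "nat \<Rightarrow> nat \<Rightarrow> nat \<Rightarrow> nat" where
  "R_cograph k i j = (LEAST n. \<forall>V E. cograph V E \<and> card V = n \<longrightarrow> has_dense_or_sparse V E k i j)"

end

theory Submission
  imports Defs "HOL-Library.Ramsey"
begin

lemma least_ge_aux:
  fixes P :: "nat \<Rightarrow> bool"
  assumes "\<exists>n. P n" and "\<And>n. n < m \<Longrightarrow> \<not> P n"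
  shows "m \<le> (LEAST n. P n)"
proof (rule ccontr)
  assume "\<not> m \<le> (LEAST n. P n)"
  then have "(LEAST n. P n) < m" by simp
  moreover have "P (LEAST n. P n)" using assms(1) by (rule LeastI_ex)
  ultimately show False using assms(2) by blast
qed

lemma ramsey_exists:
  "\<exists>n. \<forall>V E. cograph V E \<and> card V = n \<longrightarrow> has_dense_or_sparse V E k i j"
proof -
  obtain r where r: "\<forall>(V::nat set) (E::nat set set). finite V \<and> card V \<ge> r \<longrightarrow>
    (\<exists>R \<subseteq> V. card R = i \<and> clique R E \<or> card R = j \<and> indep R E)"
    using ramsey2[where m=i and n=j] by blast
  have "has_dense_or_sparse V E k i j" if cg: "cograph V E" and cr: "card V = r" for V E
  proof -
    have fin: "finite V" and sym: "\<And>u v. E u v \<Longrightarrow> E v u"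
      using cg by (auto simp: cograph_def simple_graph_def)
    define F where "F = {{u,v} | u v. E u v}"
    obtain R where R: "R \<subseteq> V" "card R = i \<and> clique R F \<or> card R = j \<and> indep R F"
      using r fin cr by blast
    show ?thesis
    proof (cases "card R = i \<and> clique R F")
      case True
      have "\<forall>u\<in>R. card {v\<in>R. compl_edges E u v} \<le> k"
      proof
        fix u assume "u \<in> R"
        have "{v\<in>R. compl_edges E u v} = {}"
        proof (rule ccontr)
          assume "{v\<in>R. compl_edges E u v} \<noteq> {}"
          then obtain v where v: "v \<in> R" "u \<noteq> v" "\<not> E u v"
            by (auto simp: compl_edges_def)
          then have "{u,v} \<in> F" using True \<open>u \<in> R\<close> by (auto simp: clique_def)
          then obtain a b where "{u,v} = {a,b}" "E a b" by (auto simp: F_def)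
          then have "E u v" using sym v(2) by (metis doubleton_eq_iff)
          then show False using v by simp
        qed
        then show "card {v\<in>R. compl_edges E u v} \<le> k" by (metis card.empty zero_le)
      qed
      then show ?thesis using True R(1)
        unfolding has_dense_or_sparse_def k_dense_def k_sparse_def by blast
    next
      case False
      then have Rj: "card R = j" "indep R F" using R(2) by auto
      have "\<forall>u\<in>R. card {v\<in>R. E u v} \<le> k"
      proof
        fix u assume "u \<in> R"
        have "{v\<in>R. E u v} = {}"
        proof (rule ccontr)
          assume "{v\<in>R. E u v} \<noteq> {}"
          then obtain v where v: "v \<in> R" "E u v" by auto
          have "u \<noteq> v" using v cg by (auto simp: cograph_def simple_graph_def)
          moreover have "{u,v} \<in> F" using v by (auto simp: F_def)
          ultimately show False using Rj(2) v(1) \<open>u \<in> R\<close> by (auto simp: indep_def)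
        qed
        then show "card {v\<in>R. E u v} \<le> k" by (metis card.empty zero_le)
      qed
      then show ?thesis using Rj(1) R(1)
        unfolding has_dense_or_sparse_def k_sparse_def by blast
    qed
  qed
  then show ?thesis by blast
qed

lemma bad_clique:
  assumes "n < i" "j \<ge> k + 2"
  shows "\<exists>V E. cograph V E \<and> card V = n \<and> \<not> has_dense_or_sparse V E k i j"
proof -
  define V where "V = {..<n}"
  define E where "E = (\<lambda>u v. u \<noteq> v \<and> u < n \<and> v < n)"
  have "cograph V E"
    unfolding cograph_def simple_graph_def V_def E_def by auto
  moreover have "card V = n" by (simp add: V_def)
  moreover have "\<not> has_dense_or_sparse V E k i j"
  proof
    assume "has_dense_or_sparse V E k i j"
    then show False
      unfolding has_dense_or_sparse_def
    proof (elim disjE exE conjE)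
      fix S assume "S \<subseteq> V" "card S = i"
      then have "card S \<le> n" using card_mono[of V S] by (simp add: V_def)
      then show False using assms \<open>card S = i\<close> by simp
    next
      fix S assume S: "S \<subseteq> V" "card S = j" "k_sparse E k S"
      then have "S \<noteq> {}" using assms by auto
      then obtain u where u: "u \<in> S" by auto
      have "{v\<in>S. E u v} = S - {u}" using S(1) u by (auto simp: E_def V_def)
      moreover have "finite S" using S(1) finite_subset by (auto simp: V_def)
      ultimately have "card {v\<in>S. E u v} = j - 1" using S(2) u by simp
      moreover have "card {v\<in>S. E u v} \<le> k" using S(3) u by (simp add: k_sparse_def)
      ultimately show False using assms by simp
    qed
  qed
  ultimately show ?thesis by blast
qed


lemma construct:
  assumes cg: "cograph V E" and bad: "\<not> has_dense_or_sparse V E k i (j - k - 1)"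
    and ik: "i \<ge> k + 2" and jk: "j \<ge> k + 2"
  shows "\<exists>V' E'. cograph V' E' \<and> card V' = card V + (i - 1) \<and> \<not> has_dense_or_sparse V' E' k i j"
proof -
  have fin: "finite V" and sym: "\<And>u v. E u v \<Longrightarrow> E v u" and irr: "\<And>u. \<not> E u u"
    and inV: "\<And>u v. E u v \<Longrightarrow> u \<in> V \<and> v \<in> V"
    using cg by (auto simp: cograph_def simple_graph_def)
  obtain N where N: "V \<subseteq> {..<N}" using fin finite_nat_bounded by blast
  define q where "q = i - k - 2"
  define Q where "Q = {N..<N+q}"
  define I where "I = {N+q..<N+(i-1)}"
  define H where "H = {N..<N+(i-1)}"
  have HQI: "H = Q \<union> I" "Q \<inter> I = {}" unfolding H_def Q_def I_def q_def using ik by auto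
  have cardQ: "card Q = q" and cardI: "card I = k + 1" and cardH: "card H = i - 1"
    unfolding Q_def I_def H_def q_def using ik by auto
  have VH: "V \<inter> H = {}" using N by (auto simp: H_def)
  define E' where "E' = (\<lambda>u v. E u v \<or> (u \<in> H \<and> v \<in> H \<and> u \<noteq> v \<and> (u \<in> Q \<or> v \<in> Q)))"
  define V' where "V' = V \<union> H"
  have finH: "finite H" by (simp add: H_def)
  have EV: "\<And>u v. u \<in> V \<Longrightarrow> E' u v = E u v" "\<And>u v. u \<in> V \<Longrightarrow> E' v u = E v u"
    using VH inV by (auto simp: E'_def)
  have EH: "\<And>u v. u \<in> H \<Longrightarrow> E' u v = (v \<in> H \<and> u \<noteq> v \<and> (u \<in> Q \<or> v \<in> Q))"
    using VH inV by (auto simp: E'_def)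
  have sg: "simple_graph V' E'"
    unfolding simple_graph_def V'_def E'_def using fin finH sym irr inV by auto
  have cg': "cograph V' E'"
    unfolding cograph_def
  proof (intro conjI sg notI, elim bexE conjE)
    fix a b c d assume abcd: "a \<in> V'" "b \<in> V'" "c \<in> V'" "d \<in> V'" and
      e: "E' a b" "E' b c" "E' c d" "\<not> E' a c" "\<not> E' b d" "\<not> E' a d" "a \<noteq> d"
    show False
    proof (cases "a \<in> V")
      case True
      then have "E a b" using e EV by auto
      then have "b \<in> V" using inV by auto
      then have "E b c" using e EV by auto
      then have "c \<in> V" using inV by auto
      then have "E c d" using e EV by auto
      then have "d \<in> V" using inV by auto
      have "E' a c = E a c" "E' b d = E b d" "E' a d = E a d" using EV True \<open>b \<in> V\<close> by auto
      moreover have "\<not> (E a b \<and> E b c \<and> E c d \<and> \<not> E a c \<and> \<not> E b d \<and> \<not> E a d \<and> a \<noteq> d)"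
        using cg True \<open>b \<in> V\<close> \<open>c \<in> V\<close> \<open>d \<in> V\<close> unfolding cograph_def by blast
      ultimately show False using e \<open>E a b\<close> \<open>E b c\<close> \<open>E c d\<close> by blast
    next
      case False
      then have aH: "a \<in> H" using abcd by (auto simp: V'_def)
      then have bH: "b \<in> H" using e EH by auto
      then have cH: "c \<in> H" using e EH by auto
      then have dH: "d \<in> H" using e EH by auto
      show False using e aH bH cH dH by (auto simp: EH)
    qed
  qed
  have cardV': "card V' = card V + (i - 1)"
    unfolding V'_def using card_Un_disjoint[OF fin finH VH] cardH by simp
  have nodense: False if S: "S \<subseteq> V'" "card S = i" "k_dense E' k S" for S
  proof -
    define A where "A = S \<inter> V"
    define B where "B = S \<inter> H"
    have finS: "finite S" using S(1) fin finH finite_subset by (auto simp: V'_def)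
    have SAB: "S = A \<union> B" "A \<inter> B = {}" using S(1) VH by (auto simp: A_def B_def V'_def)
    have finA: "finite A" and finB: "finite B" using finS by (auto simp: A_def B_def)
    have cS: "card S = card A + card B" using SAB finA finB card_Un_disjoint by metis
    show False
    proof (cases "B = {}")
      case True
      then have "S \<subseteq> V" using SAB by (auto simp: A_def)
      have "k_dense E k S"
        unfolding k_dense_def k_sparse_def
      proof
        fix u assume u: "u \<in> S"
        have "{v\<in>S. compl_edges E u v} = {v\<in>S. compl_edges E' u v}"
          using u \<open>S \<subseteq> V\<close> EV by (auto simp: compl_edges_def)
        then show "card {v\<in>S. compl_edges E u v} \<le> k"
          using S(3) u by (simp add: k_dense_def k_sparse_def)
      qed
      then show False using bad \<open>S \<subseteq> V\<close> S(2) unfolding has_dense_or_sparse_def by blast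
    next
      case False
      obtain x where x: "x \<in> B" "B \<inter> I \<noteq> {} \<longrightarrow> x \<in> I"
        using False by blast
      have xH: "x \<in> H" "x \<in> S" using x by (auto simp: B_def)
      have sub: "A \<union> (B \<inter> I - {x}) \<subseteq> {v\<in>S. compl_edges E' x v}"
      proof
        fix v assume v: "v \<in> A \<union> (B \<inter> I - {x})"
        show "v \<in> {v\<in>S. compl_edges E' x v}"
        proof (cases "v \<in> A")
          case True
          then have "v \<in> V" "v \<in> S" by (auto simp: A_def)
          then show ?thesis using xH VH EH by (auto simp: compl_edges_def)
        next
          case False
          then have "v \<in> B" "v \<in> I" "v \<noteq> x" using v by auto
          then have "x \<in> I" using x by auto
          then show ?thesis using \<open>v \<in> B\<close> \<open>v \<in> I\<close> \<open>v \<noteq> x\<close> xH EH HQI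
            by (auto simp: compl_edges_def B_def)
        qed
      qed
      have "card (A \<union> (B \<inter> I - {x})) = card A + card (B \<inter> I - {x})"
        using finA finB SAB(2) by (intro card_Un_disjoint) auto
      moreover have "card (B \<inter> I - {x}) \<ge> card (B \<inter> I) - 1"
        using finB by (simp add: card_Diff_singleton_if)
      moreover have "card B = card (B \<inter> Q) + card (B \<inter> I)"
      proof -
        have "B = (B \<inter> Q) \<union> (B \<inter> I)" using HQI by (auto simp: B_def)
        then show ?thesis using finB HQI(2) card_Un_disjoint
          by (metis Int_Un_distrib Int_empty_right finite_Int inf_assoc inf_commute)
      qed
      moreover have "card (B \<inter> Q) \<le> q"
        using cardQ by (metis card_mono finite_atLeastLessThan inf_le2 Q_def)
      ultimately have "card (A \<union> (B \<inter> I - {x})) \<ge> k + 1"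
        using cS S(2) ik unfolding q_def by linarith
      moreover have "card (A \<union> (B \<inter> I - {x})) \<le> card {v\<in>S. compl_edges E' x v}"
        using sub finS by (intro card_mono) auto
      moreover have "card {v\<in>S. compl_edges E' x v} \<le> k"
        using S(3) xH by (simp add: k_dense_def k_sparse_def)
      ultimately show False by linarith
    qed
  qed
  have nosparse: False if S: "S \<subseteq> V'" "card S = j" "k_sparse E' k S" for S
  proof -
    define A where "A = S \<inter> V"
    define B where "B = S \<inter> H"
    have finS: "finite S" using S(1) fin finH finite_subset by (auto simp: V'_def)
    have SAB: "S = A \<union> B" "A \<inter> B = {}" using S(1) VH by (auto simp: A_def B_def V'_def)
    have finA: "finite A" and finB: "finite B" using finS by (auto simp: A_def B_def)
    have cS: "card S = card A + card B" using SAB finA finB card_Un_disjoint by metis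
    have spA: "k_sparse E k A"
      unfolding k_sparse_def
    proof
      fix u assume u: "u \<in> A"
      have "{v\<in>A. E u v} = {v\<in>S. E' u v}"
        using u EV inV by (auto simp: A_def)
      moreover have "card {v\<in>S. E' u v} \<le> k" using S(3) u by (auto simp: k_sparse_def A_def)
      ultimately show "card {v\<in>A. E u v} \<le> k" by simp
    qed
    have cA: "card A < j - k - 1"
    proof (rule ccontr)
      assume "\<not> card A < j - k - 1"
      then obtain T where T: "T \<subseteq> A" "card T = j - k - 1"
        by (meson not_less obtain_subset_with_card_n)
      have "k_sparse E k T"
        unfolding k_sparse_def
      proof
        fix u assume u: "u \<in> T"
        have "card {v\<in>T. E u v} \<le> card {v\<in>A. E u v}"
          using T(1) finA by (intro card_mono) auto
        also have "\<dots> \<le> k" using spA u T(1) by (auto simp: k_sparse_def)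
        finally show "card {v\<in>T. E u v} \<le> k" .
      qed
      moreover have "T \<subseteq> V" using T(1) by (auto simp: A_def)
      ultimately show False using bad T(2) unfolding has_dense_or_sparse_def by blast
    qed
    then have cB: "card B \<ge> k + 2" using cS S(2) jk by linarith
    show False
    proof (cases "B \<inter> Q = {}")
      case True
      then have "B \<subseteq> I" using HQI by (auto simp: B_def)
      then have "card B \<le> k + 1" using cardI by (metis card_mono finite_atLeastLessThan I_def)
      then show False using cB by simp
    next
      case False
      then obtain x where x: "x \<in> B" "x \<in> Q" by auto
      have xH: "x \<in> H" "x \<in> S" using x by (auto simp: B_def)
      have "B - {x} \<subseteq> {v\<in>S. E' x v}"
        using x xH EH by (auto simp: B_def)
      then have "card (B - {x}) \<le> card {v\<in>S. E' x v}"
        using finS by (intro card_mono) auto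
      moreover have "card (B - {x}) = card B - 1" using x finB by simp
      moreover have "card {v\<in>S. E' x v} \<le> k" using S(3) xH by (simp add: k_sparse_def)
      ultimately show False using cB by linarith
    qed
  qed
  have "\<not> has_dense_or_sparse V' E' k i j"
    unfolding has_dense_or_sparse_def using nodense nosparse by blast
  then show ?thesis using cg' cardV' by blast
qed


theorem lemma7p5:
  fixes k i j :: nat
  assumes "i \<ge> k + 2" and "j \<ge> k + 2"
  shows "R_cograph k i j \<ge> (i - 1) + R_cograph k i (j - k - 1)"
proof -
  let ?P = "\<lambda>n. \<forall>V E. cograph V E \<and> card V = n \<longrightarrow> has_dense_or_sparse V E k i j"
  let ?P' = "\<lambda>n. \<forall>V E. cograph V E \<and> card V = n \<longrightarrow> has_dense_or_sparse V E k i (j - k - 1)"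
  have "\<not> ?P n" if n: "n < (i - 1) + R_cograph k i (j - k - 1)" for n
  proof (cases "n < i - 1")
    case True
    then obtain V E where "cograph V E" "card V = n" "\<not> has_dense_or_sparse V E k i j"
      using bad_clique[where n=n and i=i and j=j and k=k] assms(2) True by fastforce
    then show ?thesis by blast
  next
    case False
    then have "n - (i - 1) < (LEAST m. ?P' m)" using n unfolding R_cograph_def by linarith
    then have "\<not> ?P' (n - (i - 1))" by (rule not_less_Least)
    then obtain V E where VE: "cograph V E" "card V = n - (i - 1)"
      "\<not> has_dense_or_sparse V E k i (j - k - 1)" by blast
    obtain V' E' where "cograph V' E'" "card V' = card V + (i - 1)"
      "\<not> has_dense_or_sparse V' E' k i j"
      using construct[OF VE(1) VE(3) assms] by blast
    moreover have "card V + (i - 1) = n" using VE(2) False by simp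
    ultimately show ?thesis by auto
  qed
  then show ?thesis unfolding R_cograph_def
    by (intro least_ge_aux ramsey_exists) auto
qed

end
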